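(* For $p=(\alpha_1,\dots,\alpha_n)\in\mathbb{C}^n$, let $M_p=(x_1-\alpha_1)A+\dots+(x_n-\alpha_n)A$ and, for $1\le i\le n-2$, let $g_i=t_i(p)\,s_i-s_i(p)\,t_i\in A$. Then $M_p$ is a Poisson ideal of $A$ if and only if one of the following holds: (1) $p$ is a common zero of $s_i$ and $t_i$ for some $i$; (2) $g_1,\dots,g_{n-2}$ are algebraically dependent over $\mathbb{C}$; (3) $p$ is a singular point of the affine variety determined by $g_1,\dots,g_{n-2}$.
   Context: Let $n\ge 3$, $A=\mathbb{C}[x_1,\dots,x_n]$. Fix $s_1,t_1,\dots,s_{n-2},t_{n-2}\in A$ with each $t_i\ne 0$ and $s_i,t_i$ coprime, such that $s_1/t_1,\dots,s_{n-2}/t_{n-2}$ are algebraically independent over $\mathbb{C}$. $A$ carries the Poisson bracket $\{f,g\}=(t_1\cdots t_{n-2})^2\,\mathrm{Jac}(f,g,s_1/t_1,\dots,s_{n-2}/t_{n-2})$ ($\mathrm{Jac}$ = Jacobian determinant with respect to $x_1,\dots,x_n$). An ideal $I$ is a Poisson ideal if $\{I,A\}\subseteq I$. Note $g_i(p)=0$ for all $i$. In (3), the affine variety $\mathcal{V}(g_1,\dots,g_{n-2})$ is the one defined by the ideal generated by $g_1,\dots,g_{n-2}$ (of dimension $2$ when these are algebraically independent), and singularity is in the sense of the general Jacobian criterion for these generators: $p$ is singular iff the $(n-2)\times n$ matrix $\big(\partial g_i/\partial x_j(p)\big)$ has rank less than $n-2$. *)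

theory Defs
  imports "HOL-Library.Poly_Mapping" "HOL-Computational_Algebra.Fraction_Field"
    "Jordan_Normal_Form.DL_Rank"
begin

text \<open>Multivariate polynomials over the complex numbers in the variables x_0, x_1, ...
  (0-based indexing): a polynomial is a finitely supported map from monomials
  (exponent vectors, finitely supported maps nat to nat) to coefficients.
  The ring A = C[x_1..x_n] of the paper is the set of those polynomials
  involving only the variables x_0,...,x_(n-1), see in_A.\<close>

type_synonym mpoly = "(nat \<Rightarrow>\<^sub>0 nat) \<Rightarrow>\<^sub>0 complex"

definition Var :: "nat \<Rightarrow> mpoly" where
  "Var j = Poly_Mapping.single (Poly_Mapping.single j 1) 1"

definition Const :: "complex \<Rightarrow> mpoly" where
  "Const c = Poly_Mapping.single 0 c"

definition in_A :: "nat \<Rightarrow> mpoly \<Rightarrow> bool" where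
  "in_A n f \<longleftrightarrow> (\<forall>m \<in> Poly_Mapping.keys f. Poly_Mapping.keys m \<subseteq> {..<n})"

text \<open>Evaluation of a polynomial with complex coefficients in a commutative ring,
  along a ring map emb from the complex numbers (the C-algebra structure).\<close>
definition eval_gen :: "(complex \<Rightarrow> 'a::comm_ring_1) \<Rightarrow> (nat \<Rightarrow> 'a) \<Rightarrow> mpoly \<Rightarrow> 'a" where
  "eval_gen emb xs f =
     (\<Sum>m \<in> Poly_Mapping.keys f. emb (Poly_Mapping.lookup f m) *
        (\<Prod>j \<in> Poly_Mapping.keys m. xs j ^ Poly_Mapping.lookup m j))"

definition evalp :: "(nat \<Rightarrow> complex) \<Rightarrow> mpoly \<Rightarrow> complex" where
  "evalp p f = eval_gen (\<lambda>c. c) p f"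

definition pd :: "nat \<Rightarrow> mpoly \<Rightarrow> mpoly" where
  "pd j f = (\<Sum>m \<in> Poly_Mapping.keys f.
      Poly_Mapping.single (m - Poly_Mapping.single j 1)
        (of_nat (Poly_Mapping.lookup m j) * Poly_Mapping.lookup f m))"

definition alg_dependent :: "(complex \<Rightarrow> 'a::comm_ring_1) \<Rightarrow> nat \<Rightarrow> (nat \<Rightarrow> 'a) \<Rightarrow> bool" where
  "alg_dependent emb k xs \<longleftrightarrow> (\<exists>P. P \<noteq> 0 \<and> in_A k P \<and> eval_gen emb xs P = 0)"

definition pd_frac :: "nat \<Rightarrow> mpoly \<Rightarrow> mpoly \<Rightarrow> mpoly fract" where
  "pd_frac j s t = Fract (t * pd j s - s * pd j t) (t ^ 2)"

text \<open>The Poisson bracket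
  {f,g} = (t_0 ... t_(n-3))^2 Jac(f, g, s_0/t_0, ..., s_(n-3)/t_(n-3)),
  computed in the fraction field; Jac is the determinant of the n x n matrix whose
  rows are the gradients of f, g, s_0/t_0, ..., s_(n-3)/t_(n-3).\<close>
definition pbracket :: "nat \<Rightarrow> (nat \<Rightarrow> mpoly) \<Rightarrow> (nat \<Rightarrow> mpoly) \<Rightarrow> mpoly \<Rightarrow> mpoly \<Rightarrow> mpoly fract" where
  "pbracket n s t f g =
     to_fract ((\<Prod>i<n-2. t i) ^ 2) *
     det (mat n n (\<lambda>(r, c).
        if r = 0 then to_fract (pd c f)
        else if r = 1 then to_fract (pd c g)
        else pd_frac c (s (r - 2)) (t (r - 2))))"

text \<open>Coprimality (as in the library's coprime: every common divisor is a unit);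
  the library constant needs algebraic_semidom, which is not instantiated here.\<close>
definition coprime_p :: "mpoly \<Rightarrow> mpoly \<Rightarrow> bool" where
  "coprime_p a b \<longleftrightarrow> (\<forall>c. c dvd a \<longrightarrow> c dvd b \<longrightarrow> c dvd 1)"

definition ideal_A :: "nat \<Rightarrow> mpoly set \<Rightarrow> bool" where
  "ideal_A n I \<longleftrightarrow> I \<subseteq> {f. in_A n f} \<and> 0 \<in> I \<and>
     (\<forall>f\<in>I. \<forall>g\<in>I. f + g \<in> I) \<and> (\<forall>f\<in>I. \<forall>h. in_A n h \<longrightarrow> h * f \<in> I)"

definition poisson_ideal :: "nat \<Rightarrow> (nat \<Rightarrow> mpoly) \<Rightarrow> (nat \<Rightarrow> mpoly) \<Rightarrow> mpoly set \<Rightarrow> bool" where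
  "poisson_ideal n s t I \<longleftrightarrow> ideal_A n I \<and>
     (\<forall>f\<in>I. \<forall>g. in_A n g \<longrightarrow> (\<exists>h\<in>I. pbracket n s t f g = to_fract h))"

definition Mp :: "nat \<Rightarrow> (nat \<Rightarrow> complex) \<Rightarrow> mpoly set" where
  "Mp n p = {(\<Sum>j<n. (Var j - Const (p j)) * h j) | h. \<forall>j<n. in_A n (h j)}"

end

theory Submission
  imports Defs
begin


definition Wm :: "nat \<Rightarrow> complex mat \<Rightarrow> (nat \<Rightarrow> complex) \<Rightarrow> (nat \<Rightarrow> complex) \<Rightarrow> complex mat" where
  "Wm n J a b = mat n n (\<lambda>(r,c). if r=0 then a c else if r=1 then b c else J $$ (r-2,c))"

lemma LA1:
  fixes J :: "complex mat"
  assumes J: "J \<in> carrier_mat m n" and nm: "n = m + 2"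
    and d: "det (Wm n J a b) \<noteq> 0"
  shows "vec_space.rank m J = m"
proof -
  define W where "W = Wm n J a b"
  have W: "W \<in> carrier_mat n n" unfolding W_def Wm_def by auto
  interpret vec_space "TYPE(complex)" m .
  have sp: "span (set (cols J)) = carrier_vec m"
  proof
    show "span (set (cols J)) \<subseteq> carrier_vec m"
      using J cols_dim span_is_subset2 by (metis carrier_matD(1))
  next
    show "carrier_vec m \<subseteq> span (set (cols J))"
    proof
      fix z :: "complex vec" assume z: "z \<in> carrier_vec m"
      define y where "y = vec n (\<lambda>r. if r < 2 then 0 else z $ (r-2))"
      define x where "x = (1 / det W) \<cdot>\<^sub>v (adj_mat W *\<^sub>v y)"
      have y: "y \<in> carrier_vec n" unfolding y_def by auto
      have adj: "adj_mat W \<in> carrier_mat n n" "W * adj_mat W = det W \<cdot>\<^sub>m 1\<^sub>m n"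
        using adj_mat[OF W] by auto
      have x: "x \<in> carrier_vec n" unfolding x_def using adj y by auto
      have "W *\<^sub>v x = (1 / det W) \<cdot>\<^sub>v (W *\<^sub>v (adj_mat W *\<^sub>v y))"
        unfolding x_def using mult_mat_vec[OF W] adj y by auto
      also have "W *\<^sub>v (adj_mat W *\<^sub>v y) = (W * adj_mat W) *\<^sub>v y"
        by (rule assoc_mult_mat_vec[symmetric]) (use adj W y in auto)
      also have "\<dots> = det W \<cdot>\<^sub>v y" unfolding adj(2) using y
      proof (intro eq_vecI)
        fix i assume i: "i < dim_vec (det W \<cdot>\<^sub>v y)"
        hence i: "i < n" using y by auto
        have "(\<Sum>ia = 0..<n. det W * (if ia = i then 1 else 0) * y $ ia) =
          (\<Sum>ia\<in>{0..<n}. if ia = i then det W * y $ i else 0)" by (rule sum.cong) auto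
        then show "(det W \<cdot>\<^sub>m 1\<^sub>m n *\<^sub>v y) $ i = (det W \<cdot>\<^sub>v y) $ i"
          using i y by (auto simp: scalar_prod_def)
      qed (use y in auto)
      finally have Wx: "W *\<^sub>v x = y" using d unfolding W_def[symmetric] by auto
      have "J *\<^sub>v x = z"
      proof (rule eq_vecI)
        show "dim_vec (J *\<^sub>v x) = dim_vec z" using J z by auto
        fix k assume k: "k < dim_vec z"
        hence km: "k < m" using z by auto
        have "(W *\<^sub>v x) $ (k+2) = y $ (k+2)" using Wx by simp
        moreover have "(W *\<^sub>v x) $ (k+2) = (J *\<^sub>v x) $ k"
          using km J nm W x unfolding W_def Wm_def by (auto simp: scalar_prod_def row_def)
        moreover have "y $ (k+2) = z $ k" using km nm unfolding y_def by auto
        ultimately show "(J *\<^sub>v x) $ k = z $ k" by simp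
      qed
      then have "z \<in> col_space J" using col_space_eq[OF J] x J z by auto
      then show "z \<in> span (set (cols J))" unfolding col_space_def .
    qed
  qed
  have VV: "V\<lparr>carrier := carrier_vec m\<rparr> = V" by (simp add: module_vec_def)
  show ?thesis unfolding rank_def sp VV using dim_is_n by simp
qed

lemma LA2:
  fixes J :: "complex mat"
  assumes J: "J \<in> carrier_mat m n" and nm: "n = m + 2"
    and r: "\<not> vec_space.rank m J < m"
  shows "\<exists>i j. i < n \<and> j < n \<and>
     det (Wm n J (\<lambda>c. if c = i then 1 else 0) (\<lambda>c. if c = j then 1 else 0)) \<noteq> 0"
proof -
  interpret vec_space "TYPE(complex)" m .
  obtain S where maxS: "maximal S (\<lambda>T. T \<subseteq> set (cols J) \<and> lin_indpt T)"
    using maximal_exists[of "(\<lambda>T. T \<subseteq> set (cols J) \<and> lin_indpt T)" "card (set (cols J))" "{}"]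
    by (meson List.finite_set card_mono empty_iff empty_subsetI finite_lin_indpt2 rev_finite_subset)
  have rS: "rank J = card S" using rank_card_indpt[OF J maxS] .
  have SJ: "S \<subseteq> set (cols J)" and liS: "lin_indpt S" using maxS unfolding maximal_def by auto
  have "m \<le> card S" using r rS by auto
  then obtain S' where S': "S' \<subseteq> S" "card S' = m" "finite S'" by (rule obtain_subset_with_card_n)
  have liS': "lin_indpt S'" using subset_li_is_li[OF liS S'(1)] .
  have S'J: "S' \<subseteq> set (cols J)" using S' SJ by auto
  have S'c: "S' \<subseteq> carrier_vec m" using S'J J cols_dim by (metis carrier_matD(1) subset_trans)
  define idx where "idx w = (SOME c. c < n \<and> col J c = w)" for w
  have idx: "idx w < n \<and> col J (idx w) = w" if "w \<in> S'" for w
  proof -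
    have "\<exists>c. c < n \<and> col J c = w"
      using that S'J J by (force simp: cols_def)
    then show ?thesis unfolding idx_def by (rule someI_ex)
  qed
  define K where "K = idx ` S'"
  have inj: "inj_on idx S'" by (metis idx inj_onI)
  have cK: "card K = m" unfolding K_def using card_image[OF inj] S' by auto
  have Kn: "K \<subseteq> {0..<n}" unfolding K_def using idx by auto
  have "card ({0..<n} - K) = 2" using card_Diff_subset[OF _ Kn] cK nm
    by (metis K_def S'(3) card_atLeastLessThan diff_add_inverse diff_zero finite_imageI)
  then obtain i j where ij: "{0..<n} - K = {i, j}" "i \<noteq> j" by (auto simp: card_2_iff)
  have i: "i < n" "i \<notin> K" and j: "j < n" "j \<notin> K" using ij by auto
  define W where "W = Wm n J (\<lambda>c. if c = i then 1 else 0) (\<lambda>c. if c = j then 1 else 0)"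
  have W: "W \<in> carrier_mat n n" unfolding W_def Wm_def by auto
  have "det W \<noteq> 0"
  proof
    assume "det W = 0"
    then obtain v where v: "v \<in> carrier_vec n" "v \<noteq> 0\<^sub>v n" "W *\<^sub>v v = 0\<^sub>v n"
      using det_0_iff_vec_prod_zero_field[OF W] by auto
    have Wv: "(W *\<^sub>v v) $ r = (\<Sum>c = 0..<n. W $$ (r,c) * v $ c)" if "r < n" for r
      using that W v(1) by (auto simp: scalar_prod_def row_def)
    have W0: "W $$ (0,c) = (if c = i then 1 else 0)" "W $$ (Suc 0,c) = (if c = j then 1 else 0)"
       if "c < n" for c
      using that nm unfolding W_def Wm_def by auto
    have W2: "W $$ (k+2,c) = J $$ (k,c)" if "c < n" "k < m" for c k
      using that nm unfolding W_def Wm_def by auto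
    have "(\<Sum>c = 0..<n. W $$ (0,c) * v $ c) = (\<Sum>c\<in>{0..<n}. if c = i then v $ i else 0)"
      by (rule sum.cong) (simp_all add: W0)
    moreover have "(W *\<^sub>v v) $ 0 = 0" using v nm by auto
    moreover have "(\<Sum>c\<in>{0..<n}. if c = i then v $ i else 0) = v $ i" using i by simp
    ultimately have vi: "v $ i = 0" using Wv[of 0] nm by simp
    have "(\<Sum>c = 0..<n. W $$ (1,c) * v $ c) = (\<Sum>c\<in>{0..<n}. if c = j then v $ j else 0)"
      by (rule sum.cong) (simp_all add: W0)
    moreover have "(W *\<^sub>v v) $ 1 = 0" using v nm by auto
    moreover have "(\<Sum>c\<in>{0..<n}. if c = j then v $ j else 0) = v $ j" using j by simp
    ultimately have vj: "v $ j = 0" using Wv[of 1] nm by simp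
    have vK: "v $ c = 0" if "c < n" "c \<notin> K" for c
      using that ij vi vj by auto
    have Jv: "(\<Sum>c = 0..<n. J $$ (k,c) * v $ c) = 0" if k: "k < m" for k
    proof -
      have "(W *\<^sub>v v) $ (k+2) = (\<Sum>c = 0..<n. J $$ (k,c) * v $ c)"
        using Wv[of "k+2"] k nm W2[OF _ k] by simp
      then show ?thesis using v nm k by auto
    qed
    define a where "a w = v $ idx w" for w
    have lc: "lincomb a S' = 0\<^sub>v m"
    proof (rule eq_vecI)
      show "dim_vec (lincomb a S') = dim_vec (0\<^sub>v m)"
        using lincomb_closed[OF S'c] by auto
      fix k assume "k < dim_vec (0\<^sub>v m)"
      hence k: "k < m" by auto
      have "lincomb a S' $ k = (\<Sum>w\<in>S'. a w * w $ k)" using lincomb_index[OF k S'c] .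
      also have "\<dots> = (\<Sum>w\<in>S'. v $ idx w * col J (idx w) $ k)"
        unfolding a_def using idx by (intro sum.cong) auto
      also have "\<dots> = (\<Sum>c\<in>K. v $ c * col J c $ k)"
        unfolding K_def by (rule sum.reindex[OF inj, symmetric, unfolded o_def])
      also have "\<dots> = (\<Sum>c\<in>{0..<n}. v $ c * col J c $ k)"
        by (rule sum.mono_neutral_left) (use Kn vK in auto)
      also have "\<dots> = (\<Sum>c = 0..<n. J $$ (k,c) * v $ c)"
        using J k by (intro sum.cong) auto
      finally show "lincomb a S' $ k = 0\<^sub>v m $ k" using Jv[OF k] k by auto
    qed
    obtain c where c: "c < n" "v $ c \<noteq> 0" using v by (metis carrier_vecD eq_vecI index_zero_vec(1) index_zero_vec(2))
    hence "c \<in> K" using vK by auto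
    then obtain w where w: "w \<in> S'" "c = idx w" unfolding K_def by auto
    have "lin_dep S'"
      by (rule lin_dep_crit[OF S'(3) order_refl _ w(1)]) (use w c lc a_def in auto)
    then show False using liS' by auto
  qed
  then show ?thesis using i j unfolding W_def by auto
qed



lemma pm_repr:
  "(f::'a \<Rightarrow>\<^sub>0 'b::comm_monoid_add) =
     (\<Sum>m\<in>Poly_Mapping.keys f. Poly_Mapping.single m (Poly_Mapping.lookup f m))"
proof (rule poly_mapping_eqI)
  fix k
  show "Poly_Mapping.lookup f k = Poly_Mapping.lookup
     (\<Sum>m\<in>Poly_Mapping.keys f. Poly_Mapping.single m (Poly_Mapping.lookup f m)) k"
    unfolding lookup_sum lookup_single when_def
    by (cases "k \<in> Poly_Mapping.keys f") (auto simp: in_keys_iff)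
qed

lemma update_add_single:
  "a \<notin> Poly_Mapping.keys f \<Longrightarrow> Poly_Mapping.update a b f = f + Poly_Mapping.single a b"
  by (rule poly_mapping_eqI) (auto simp: lookup_update lookup_add lookup_single when_def in_keys_iff)

lemma pm_induct_add:
  fixes f :: "'a \<Rightarrow>\<^sub>0 'b::comm_monoid_add"
  assumes "P 0" "\<And>f a b. P f \<Longrightarrow> P (f + Poly_Mapping.single a b)"
  shows "P f"
proof (induction f rule: update_induct)
  case const then show ?case using assms(1) .
next
  case (update f a b) then show ?case using assms(2) update_add_single by metis
qed

lemma Const_0[simp]: "Const 0 = 0" by (simp add: Const_def)
lemma Const_1[simp]: "Const 1 = 1" by (simp add: Const_def)
lemma Const_add: "Const (a + b) = Const a + Const b" by (simp add: Const_def single_add)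
lemma Const_mult: "Const (a * b) = Const a * Const b" by (simp add: Const_def mult_single)
lemma Const_diff: "Const (a - b) = Const a - Const b" by (simp add: Const_def single_diff)
lemma Const_uminus: "Const (- a) = - Const a" by (simp add: Const_def single_uminus)

lemma Const_hom: "comm_ring_hom Const"
  by unfold_locales (auto simp: Const_add Const_mult)

lemma Const_inj: "Const a = Const b \<longleftrightarrow> a = b"
  by (metis Const_def lookup_single_eq)

section \<open>Evaluation\<close>

definition mon :: "(nat \<Rightarrow> 'a::comm_ring_1) \<Rightarrow> (nat \<Rightarrow>\<^sub>0 nat) \<Rightarrow> 'a" where
  "mon xs m = (\<Prod>j\<in>Poly_Mapping.keys m. xs j ^ Poly_Mapping.lookup m j)"

lemma mon_superset:
  assumes "finite T" "Poly_Mapping.keys m \<subseteq> T"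
  shows "mon xs m = (\<Prod>j\<in>T. xs j ^ Poly_Mapping.lookup m j)"
  unfolding mon_def by (rule prod.mono_neutral_left) (use assms in \<open>auto simp: in_keys_iff\<close>)

lemma mon_add: "mon xs (a + b) = mon xs a * mon xs b"
proof -
  let ?T = "Poly_Mapping.keys a \<union> Poly_Mapping.keys b"
  have "mon xs (a + b) = (\<Prod>j\<in>?T. xs j ^ Poly_Mapping.lookup (a+b) j)"
    by (rule mon_superset) (auto dest: subsetD[OF keys_add])
  also have "\<dots> = (\<Prod>j\<in>?T. xs j ^ Poly_Mapping.lookup a j) * (\<Prod>j\<in>?T. xs j ^ Poly_Mapping.lookup b j)"
    by (simp add: lookup_add power_add prod.distrib)
  also have "\<dots> = mon xs a * mon xs b"
    by (subst (1 2) mon_superset[of ?T]) auto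
  finally show ?thesis .
qed

lemma mon_0[simp]: "mon xs 0 = 1" by (simp add: mon_def)

lemma mon_single[simp]: "mon xs (Poly_Mapping.single j e) = xs j ^ e"
  by (cases "e = 0") (auto simp: mon_def)

context
  fixes emb :: "complex \<Rightarrow> 'a::comm_ring_1"
  assumes emb: "comm_ring_hom emb"
begin

interpretation e: comm_ring_hom emb by (rule emb)

lemma eval_superset:
  assumes "finite S" "Poly_Mapping.keys f \<subseteq> S"
  shows "eval_gen emb xs f = (\<Sum>m\<in>S. emb (Poly_Mapping.lookup f m) * mon xs m)"
  unfolding eval_gen_def mon_def[symmetric]
  by (rule sum.mono_neutral_left) (use assms in \<open>auto simp: in_keys_iff\<close>)

lemma eval_add: "eval_gen emb xs (f + g) = eval_gen emb xs f + eval_gen emb xs g"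
proof -
  let ?S = "Poly_Mapping.keys f \<union> Poly_Mapping.keys g"
  have "eval_gen emb xs (f + g) = (\<Sum>m\<in>?S. emb (Poly_Mapping.lookup (f+g) m) * mon xs m)"
    by (rule eval_superset) (auto dest: subsetD[OF keys_add])
  also have "\<dots> = (\<Sum>m\<in>?S. emb (Poly_Mapping.lookup f m) * mon xs m) +
     (\<Sum>m\<in>?S. emb (Poly_Mapping.lookup g m) * mon xs m)"
    by (simp add: lookup_add e.hom_add distrib_right sum.distrib)
  also have "\<dots> = eval_gen emb xs f + eval_gen emb xs g"
    by (subst (1 2) eval_superset[of ?S]) auto
  finally show ?thesis .
qed

lemma eval_0: "eval_gen emb xs 0 = 0" by (simp add: eval_gen_def)

lemma eval_single: "eval_gen emb xs (Poly_Mapping.single m c) = emb c * mon xs m"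
  by (cases "c = 0") (auto simp: eval_gen_def mon_def)

lemma eval_mult_single: "eval_gen emb xs (Poly_Mapping.single a b * g) =
   eval_gen emb xs (Poly_Mapping.single a b) * eval_gen emb xs g"
proof (induction g rule: pm_induct_add)
  case 1 then show ?case by (simp add: eval_0)
next
  case (2 g c d)
  then show ?case by (simp add: distrib_left eval_add mult_single eval_single e.hom_mult mon_add ac_simps)
qed

lemma eval_mult: "eval_gen emb xs (f * g) = eval_gen emb xs f * eval_gen emb xs g"
proof (induction f rule: pm_induct_add)
  case 1 then show ?case by (simp add: eval_0)
next
  case (2 f a b)
  then show ?case by (simp add: distrib_right eval_add eval_mult_single)
qed

lemma eval_hom: "comm_ring_hom (eval_gen emb xs)"
proof
  have "(1::mpoly) = Poly_Mapping.single 0 1" by simp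
  then show "eval_gen emb xs 1 = 1"
    using eval_single[of xs 0 1] by simp
qed (auto simp: eval_add eval_mult eval_0)

lemma eval_Const[simp]: "eval_gen emb xs (Const c) = emb c"
  by (simp add: Const_def eval_single)

lemma eval_Var[simp]: "eval_gen emb xs (Var j) = xs j"
  by (simp add: Var_def eval_single)

end

lemma id_hom: "comm_ring_hom (\<lambda>c::complex. c)" by unfold_locales auto

lemma evalp_hom: "comm_ring_hom (evalp p)"
  unfolding evalp_def[abs_def] by (rule eval_hom[OF id_hom])

lemma evalp_Const[simp]: "evalp p (Const c) = c"
  unfolding evalp_def by (rule eval_Const[OF id_hom])
lemma evalp_Var[simp]: "evalp p (Var j) = p j"
  unfolding evalp_def by (rule eval_Var[OF id_hom])




section \<open>Partial derivatives\<close>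

abbreviation ee :: "nat \<Rightarrow> nat \<Rightarrow>\<^sub>0 nat" where "ee j \<equiv> Poly_Mapping.single j 1"

lemma pd_superset:
  assumes "finite S" "Poly_Mapping.keys f \<subseteq> S"
  shows "pd j f = (\<Sum>m\<in>S. Poly_Mapping.single (m - ee j)
      (of_nat (Poly_Mapping.lookup m j) * Poly_Mapping.lookup f m))"
  unfolding pd_def
  by (rule sum.mono_neutral_left) (use assms in \<open>auto simp: in_keys_iff\<close>)

lemma pd_add: "pd j (f + g) = pd j f + pd j g"
proof -
  let ?S = "Poly_Mapping.keys f \<union> Poly_Mapping.keys g"
  have "pd j (f + g) = (\<Sum>m\<in>?S. Poly_Mapping.single (m - ee j)
      (of_nat (Poly_Mapping.lookup m j) * Poly_Mapping.lookup (f+g) m))"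
    by (rule pd_superset) (auto dest: subsetD[OF keys_add])
  also have "\<dots> = (\<Sum>m\<in>?S. Poly_Mapping.single (m - ee j)
      (of_nat (Poly_Mapping.lookup m j) * Poly_Mapping.lookup f m)) +
     (\<Sum>m\<in>?S. Poly_Mapping.single (m - ee j)
      (of_nat (Poly_Mapping.lookup m j) * Poly_Mapping.lookup g m))"
    by (simp add: lookup_add distrib_left single_add sum.distrib)
  also have "\<dots> = pd j f + pd j g"
    by (subst (1 2) pd_superset[of ?S]) auto
  finally show ?thesis .
qed

lemma pd_0[simp]: "pd j 0 = 0" by (simp add: pd_def)

lemma pd_single: "pd j (Poly_Mapping.single m c) =
   Poly_Mapping.single (m - ee j) (of_nat (Poly_Mapping.lookup m j) * c)"
  by (cases "c = 0") (auto simp: pd_def)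

lemma pd_hom: "ab_group_add_hom (pd j)"
  by unfold_locales (simp_all add: pd_add)

lemma pd_uminus: "pd j (- f) = - pd j f"
  using pd_add[of j "-f" f] by (simp add: eq_neg_iff_add_eq_0)
lemma pd_diff: "pd j (f - g) = pd j f - pd j g"
  using pd_add[of j f "-g"] pd_uminus[of j g] by simp
lemma pd_sum: "pd j (sum h S) = (\<Sum>x\<in>S. pd j (h x))"
  by (induction S rule: infinite_finite_induct) (auto simp: pd_add)

lemma minus_ee_add:
  assumes "Poly_Mapping.lookup a j \<noteq> 0"
  shows "a - ee j + c = a + c - ee j"
  by (rule poly_mapping_eqI) (use assms in \<open>auto simp: lookup_add lookup_minus lookup_single when_def\<close>)

lemma minus_ee_add2:
  assumes "Poly_Mapping.lookup c j \<noteq> 0"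
  shows "a + (c - ee j) = a + c - ee j"
  by (rule poly_mapping_eqI) (use assms in \<open>auto simp: lookup_add lookup_minus lookup_single when_def\<close>)

lemma pd_mult_single1:
  "pd j (Poly_Mapping.single a b * Poly_Mapping.single c d) =
   pd j (Poly_Mapping.single a b) * Poly_Mapping.single c d + Poly_Mapping.single a b * pd j (Poly_Mapping.single c d)"
proof -
  have 1: "Poly_Mapping.single (a - ee j + c) (of_nat (Poly_Mapping.lookup a j) * b * d) =
     Poly_Mapping.single (a + c - ee j) (of_nat (Poly_Mapping.lookup a j) * b * d)"
    by (cases "Poly_Mapping.lookup a j = 0") (simp, subst minus_ee_add, simp_all)
  have 2: "Poly_Mapping.single (a + (c - ee j)) (b * (of_nat (Poly_Mapping.lookup c j) * d)) =
     Poly_Mapping.single (a + c - ee j) (of_nat (Poly_Mapping.lookup c j) * b * d)"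
    by (cases "Poly_Mapping.lookup c j = 0") (simp, subst minus_ee_add2, simp_all add: ac_simps)
  have e: "(of_nat (Poly_Mapping.lookup (a+c) j) :: complex) * (b*d) =
     of_nat (Poly_Mapping.lookup a j) * b * d + of_nat (Poly_Mapping.lookup c j) * b * d"
    by (simp add: lookup_add algebra_simps)
  show ?thesis
    unfolding pd_single mult_single 1 2 e single_add ..
qed

lemma pd_mult_single: "pd j (Poly_Mapping.single a b * g) =
   pd j (Poly_Mapping.single a b) * g + Poly_Mapping.single a b * pd j g"
proof (induction g rule: pm_induct_add)
  case 1 then show ?case by simp
next
  case (2 g c d)
  then show ?case by (simp add: distrib_left pd_add pd_mult_single1)
qed

lemma pd_mult: "pd j (f * g) = pd j f * g + f * pd j g"
proof (induction f rule: pm_induct_add)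
  case 1 then show ?case by simp
next
  case (2 f a b)
  then show ?case by (simp add: distrib_right pd_add pd_mult_single)
qed

lemma pd_Const[simp]: "pd j (Const c) = 0"
  by (simp add: Const_def pd_single)

lemma pd_Var: "pd j (Var i) = (if i = j then 1 else 0)"
  by (auto simp: Var_def pd_single lookup_single when_def)

lemma pd_Const_mult: "pd j (Const c * f) = Const c * pd j f"
  by (simp add: pd_mult)

lemma in_A_0[simp]: "in_A n 0" by (simp add: in_A_def)
lemma in_A_Const[simp]: "in_A n (Const c)" by (simp add: in_A_def Const_def)
lemma in_A_1[simp]: "in_A n 1" using in_A_Const[of n 1] by simp
lemma in_A_Var: "j < n \<Longrightarrow> in_A n (Var j)" by (simp add: in_A_def Var_def)
lemma in_A_add: assumes "in_A n f" "in_A n g" shows "in_A n (f + g)"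
  unfolding in_A_def
proof
  fix m assume "m \<in> Poly_Mapping.keys (f + g)"
  then have "m \<in> Poly_Mapping.keys f \<or> m \<in> Poly_Mapping.keys g" using keys_add[of f g] by auto
  then show "Poly_Mapping.keys m \<subseteq> {..<n}" using assms unfolding in_A_def by auto
qed
lemma in_A_mult: assumes "in_A n f" "in_A n g" shows "in_A n (f * g)"
  unfolding in_A_def
proof
  fix m assume "m \<in> Poly_Mapping.keys (f * g)"
  then obtain a b where ab: "a \<in> Poly_Mapping.keys f" "b \<in> Poly_Mapping.keys g" "m = a + b"
    using keys_mult[of f g] by auto
  have "Poly_Mapping.keys m \<subseteq> Poly_Mapping.keys a \<union> Poly_Mapping.keys b"
    unfolding ab(3) by (rule keys_add)
  also have "\<dots> \<subseteq> {..<n}" using ab assms unfolding in_A_def by auto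
  finally show "Poly_Mapping.keys m \<subseteq> {..<n}" .
qed
lemma in_A_uminus: assumes "in_A n f" shows "in_A n (- f)"
proof -
  have "Poly_Mapping.keys (- f) = Poly_Mapping.keys f" by (auto simp: in_keys_iff)
  then show ?thesis using assms unfolding in_A_def by simp
qed
lemma in_A_diff: "in_A n f \<Longrightarrow> in_A n g \<Longrightarrow> in_A n (f - g)"
  using in_A_add[of n f "- g"] in_A_uminus by simp
lemma in_A_sum: "(\<And>x. x \<in> S \<Longrightarrow> in_A n (h x)) \<Longrightarrow> in_A n (sum h S)"
  by (induction S rule: infinite_finite_induct) (auto intro: in_A_add)
lemma in_A_prod: "(\<And>x. x \<in> S \<Longrightarrow> in_A n (h x)) \<Longrightarrow> in_A n (prod h S)"
  by (induction S rule: infinite_finite_induct) (auto intro: in_A_mult)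
lemma in_A_of_int: "in_A n (of_int k)"
  using in_A_Const[of n "of_int k"] by (simp add: Const_def)
lemma in_A_single: "Poly_Mapping.keys m \<subseteq> {..<n} \<Longrightarrow> in_A n (Poly_Mapping.single m c)"
  by (simp add: in_A_def)
lemma in_A_pd: "in_A n f \<Longrightarrow> in_A n (pd j f)"
  unfolding pd_def
proof (rule in_A_sum)
  fix m assume "in_A n f" "m \<in> Poly_Mapping.keys f"
  then have "Poly_Mapping.keys m \<subseteq> {..<n}" by (auto simp: in_A_def)
  moreover have "Poly_Mapping.keys (m - ee j) \<subseteq> Poly_Mapping.keys m"
    by (auto simp: in_keys_iff lookup_minus)
  ultimately show "in_A n (Poly_Mapping.single (m - ee j)
      (of_nat (Poly_Mapping.lookup m j) * Poly_Mapping.lookup f m))"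
    by (intro in_A_single) auto
qed



interpretation ev: comm_ring_hom "evalp p" for p by (rule evalp_hom)

lemma Var_pow: "Var i ^ e = Poly_Mapping.single (Poly_Mapping.single i e) 1"
proof (induction e)
  case 0 then show ?case by simp
next
  case (Suc e)
  have "Var i ^ Suc e = Var i * Var i ^ e" by simp
  also have "\<dots> = Poly_Mapping.single (Poly_Mapping.single i 1) 1 * Poly_Mapping.single (Poly_Mapping.single i e) 1"
    by (subst Suc.IH) (simp only: Var_def)
  also have "\<dots> = Poly_Mapping.single (Poly_Mapping.single i 1 + Poly_Mapping.single i e) (1 * 1)"
    by (rule mult_single)
  also have "Poly_Mapping.single i 1 + Poly_Mapping.single i e = Poly_Mapping.single i (1 + e)"
    by (rule single_add[symmetric])
  finally show ?case by simp
qed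

lemma single_prod: "finite K \<Longrightarrow>
  (\<Prod>i\<in>K. Poly_Mapping.single (g i) (1::complex)) = Poly_Mapping.single (\<Sum>i\<in>K. g i) 1"
  by (induction K rule: finite_induct) (auto simp: mult_single)

lemma mon_poly: "Poly_Mapping.single m c =
   Const c * (\<Prod>i\<in>Poly_Mapping.keys m. Var i ^ Poly_Mapping.lookup m i)"
proof -
  have "(\<Prod>i\<in>Poly_Mapping.keys m. Var i ^ Poly_Mapping.lookup m i) =
     Poly_Mapping.single (\<Sum>i\<in>Poly_Mapping.keys m. Poly_Mapping.single i (Poly_Mapping.lookup m i)) 1"
    unfolding Var_pow by (rule single_prod) simp
  also have "\<dots> = Poly_Mapping.single m 1" using pm_repr[of m] by simp
  finally show ?thesis by (simp add: Const_def mult_single)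
qed

lemma in_A_pow: "in_A n f \<Longrightarrow> in_A n (f ^ e)"
  by (induction e) (simp_all add: in_A_mult)

lemma mpoly_induct_A[consumes 1, case_names Const Var Add Mul]:
  assumes f: "in_A n f" and C: "\<And>c. P (Const c)" and V: "\<And>i. i < n \<Longrightarrow> P (Var i)"
    and Add: "\<And>f g. in_A n f \<Longrightarrow> in_A n g \<Longrightarrow> P f \<Longrightarrow> P g \<Longrightarrow> P (f + g)"
    and Mul: "\<And>f g. in_A n f \<Longrightarrow> in_A n g \<Longrightarrow> P f \<Longrightarrow> P g \<Longrightarrow> P (f * g)"
  shows "P f"
proof -
  have P0: "P 0" using C[of 0] by simp
  have P1: "P 1" using C[of 1] by simp
  have S: "in_A n (sum h S) \<and> P (sum h S)" if "finite S" "\<forall>x\<in>S. in_A n (h x) \<and> P (h x)" for S and h :: "'b \<Rightarrow> mpoly"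
    using that by (induction S rule: finite_induct) (simp_all add: P0 in_A_add Add)
  have Pr: "in_A n (prod h S) \<and> P (prod h S)" if "finite S" "\<forall>x\<in>S. in_A n (h x) \<and> P (h x)" for S and h :: "'b \<Rightarrow> mpoly"
    using that by (induction S rule: finite_induct) (simp_all add: P1 in_A_mult Mul)
  have Pw: "P (g ^ e)" if "in_A n g" "P g" for g e
    using that by (induction e) (simp_all add: P1 in_A_pow Mul)
  have "in_A n (Poly_Mapping.single m (Poly_Mapping.lookup f m)) \<and> P (Poly_Mapping.single m (Poly_Mapping.lookup f m))"
    if m: "m \<in> Poly_Mapping.keys f" for m
  proof -
    have km: "Poly_Mapping.keys m \<subseteq> {..<n}" using f m unfolding in_A_def by auto
    have "in_A n (\<Prod>i\<in>Poly_Mapping.keys m. Var i ^ Poly_Mapping.lookup m i) \<and>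
          P (\<Prod>i\<in>Poly_Mapping.keys m. Var i ^ Poly_Mapping.lookup m i)"
    proof (rule Pr)
      show "\<forall>x\<in>Poly_Mapping.keys m. in_A n (Var x ^ Poly_Mapping.lookup m x) \<and> P (Var x ^ Poly_Mapping.lookup m x)"
        using km in_A_pow in_A_Var Pw V by auto
    qed simp
    then show ?thesis unfolding mon_poly[of m]
      using Mul[OF in_A_Const _ C] in_A_mult[OF in_A_Const] by simp
  qed
  then have "P (\<Sum>m\<in>Poly_Mapping.keys f. Poly_Mapping.single m (Poly_Mapping.lookup f m))"
    using S[OF finite_keys, of f "\<lambda>m. Poly_Mapping.single m (Poly_Mapping.lookup f m)"] by simp
  then show ?thesis using pm_repr[of f] by simp
qed

section \<open>The ideal M_p\<close>

lemma Mp_in_A: "x \<in> Mp n p \<Longrightarrow> in_A n x"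
  unfolding Mp_def by (auto intro!: in_A_sum in_A_mult in_A_diff in_A_Var)

lemma Mp_0: "0 \<in> Mp n p"
  unfolding Mp_def by (rule CollectI, rule exI[of _ "\<lambda>_. 0"]) auto

lemma Mp_add: "x \<in> Mp n p \<Longrightarrow> y \<in> Mp n p \<Longrightarrow> x + y \<in> Mp n p"
proof -
  assume "x \<in> Mp n p" "y \<in> Mp n p"
  then obtain h k where x: "x = (\<Sum>j<n. (Var j - Const (p j)) * h j)" "\<forall>j<n. in_A n (h j)"
    and y: "y = (\<Sum>j<n. (Var j - Const (p j)) * k j)" "\<forall>j<n. in_A n (k j)"
    unfolding Mp_def by auto
  have "x + y = (\<Sum>j<n. (Var j - Const (p j)) * (h j + k j))"
    unfolding x y by (simp add: distrib_left sum.distrib)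
  moreover have "\<forall>j<n. in_A n (h j + k j)" using x y by (auto intro: in_A_add)
  ultimately show ?thesis unfolding Mp_def by (intro CollectI exI[of _ "\<lambda>j. h j + k j"]) auto
qed

lemma Mp_mult: "x \<in> Mp n p \<Longrightarrow> in_A n g \<Longrightarrow> g * x \<in> Mp n p"
proof -
  assume "x \<in> Mp n p" and g: "in_A n g"
  then obtain h where x: "x = (\<Sum>j<n. (Var j - Const (p j)) * h j)" "\<forall>j<n. in_A n (h j)"
    unfolding Mp_def by auto
  have "g * x = (\<Sum>j<n. (Var j - Const (p j)) * (g * h j))"
    unfolding x by (simp add: sum_distrib_left ac_simps)
  moreover have "\<forall>j<n. in_A n (g * h j)" using x g by (auto intro: in_A_mult)
  ultimately show ?thesis unfolding Mp_def by (intro CollectI exI[of _ "\<lambda>j. g * h j"]) auto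
qed

lemma Mp_Var: assumes "i < n" shows "Var i - Const (p i) \<in> Mp n p"
proof -
  have "Var i - Const (p i) = (\<Sum>j<n. (Var j - Const (p j)) * (if j = i then 1 else 0))"
    using assms by (simp add: if_distrib cong: if_cong)
  moreover have "\<forall>j<n. in_A n (if j = i then 1 else 0)" by auto
  ultimately show ?thesis unfolding Mp_def by (intro CollectI exI[of _ "\<lambda>j. if j = i then 1 else 0"]) auto
qed

lemma Mp_eval: "x \<in> Mp n p \<Longrightarrow> evalp p x = 0"
  unfolding Mp_def by (auto simp: ev.hom_sum ev.hom_mult ev.hom_minus)

lemma Mp_ideal: "ideal_A n (Mp n p)"
  unfolding ideal_A_def using Mp_in_A Mp_0 Mp_add Mp_mult by blast

lemma Taylor: "in_A n h \<Longrightarrow> h - Const (evalp p h) \<in> Mp n p"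
proof (induction rule: mpoly_induct_A)
  case (Const c) then show ?case by (simp add: Mp_0)
next
  case (Var i) then show ?case by (simp add: Mp_Var)
next
  case (Add f g)
  have eq: "f + g - Const (evalp p (f + g)) = (f - Const (evalp p f)) + (g - Const (evalp p g))"
    by (simp add: ev.hom_add Const_add)
  show ?case unfolding eq using Mp_add Add by blast
next
  case (Mul f g)
  have eq: "f * g - Const (evalp p (f * g)) =
     g * (f - Const (evalp p f)) + Const (evalp p f) * (g - Const (evalp p g))"
    by (simp add: ev.hom_mult Const_mult algebra_simps)
  show ?case unfolding eq using Mp_add Mp_mult Mul in_A_Const by blast
qed

lemma in_Mp: "in_A n h \<Longrightarrow> evalp p h = 0 \<Longrightarrow> h \<in> Mp n p"
  using Taylor[of n h p] by simp



section \<open>Chain rule\<close>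

interpretation evC: comm_ring_hom "eval_gen Const xs" for xs
  by (rule eval_hom[OF Const_hom])

lemma chain_rule:
  assumes "in_A m P"
  shows "pd j (eval_gen Const xs P) = (\<Sum>k<m. eval_gen Const xs (pd k P) * pd j (xs k))"
  using assms
proof (induction rule: mpoly_induct_A)
  case (Const c) then show ?case by (simp add: eval_Const[OF Const_hom])
next
  case (Var i)
  have "(\<Sum>k<m. eval_gen Const xs (pd k (Var i)) * pd j (xs k)) =
     (\<Sum>k<m. if k = i then pd j (xs i) else 0)"
    by (rule sum.cong) (auto simp: pd_Var)
  also have "\<dots> = pd j (xs i)" using Var by simp
  finally show ?case by (simp add: eval_Var[OF Const_hom])
next
  case (Add f g)
  then show ?case by (simp add: evC.hom_add pd_add sum.distrib distrib_right)
next
  case (Mul f g)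
  let ?e = "eval_gen Const xs"
  have "pd j (?e (f * g)) = pd j (?e f) * ?e g + ?e f * pd j (?e g)"
    by (simp add: evC.hom_mult pd_mult)
  also have "\<dots> = (\<Sum>k<m. ?e (pd k f) * pd j (xs k) * ?e g) + (\<Sum>k<m. ?e f * (?e (pd k g) * pd j (xs k)))"
    unfolding Mul.IH sum_distrib_left sum_distrib_right ..
  also have "\<dots> = (\<Sum>k<m. ?e (pd k (f * g)) * pd j (xs k))"
    unfolding sum.distrib[symmetric]
    by (rule sum.cong) (simp_all add: pd_mult evC.hom_add evC.hom_mult algebra_simps)
  finally show ?case .
qed

definition tdeg :: "(nat \<Rightarrow>\<^sub>0 nat) \<Rightarrow> nat" where
  "tdeg a = (\<Sum>i\<in>Poly_Mapping.keys a. Poly_Mapping.lookup a i)"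

definition deg :: "mpoly \<Rightarrow> nat" where
  "deg P = Max (insert 0 (tdeg ` Poly_Mapping.keys P))"

lemma tdeg_superset: "finite S \<Longrightarrow> Poly_Mapping.keys a \<subseteq> S \<Longrightarrow> tdeg a = (\<Sum>i\<in>S. Poly_Mapping.lookup a i)"
  unfolding tdeg_def by (rule sum.mono_neutral_left) (auto simp: in_keys_iff)

lemma tdeg_add: "tdeg (a + b) = tdeg a + tdeg b"
proof -
  let ?S = "Poly_Mapping.keys a \<union> Poly_Mapping.keys b"
  have "tdeg (a + b) = (\<Sum>i\<in>?S. Poly_Mapping.lookup (a + b) i)"
    by (rule tdeg_superset) (auto dest: subsetD[OF keys_add])
  also have "\<dots> = (\<Sum>i\<in>?S. Poly_Mapping.lookup a i) + (\<Sum>i\<in>?S. Poly_Mapping.lookup b i)"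
    by (simp add: lookup_add sum.distrib)
  also have "\<dots> = tdeg a + tdeg b" by (subst (1 2) tdeg_superset[of ?S]) auto
  finally show ?thesis .
qed

lemma tdeg_ee: "tdeg (ee k) = 1" by (simp add: tdeg_def)

lemma plus_ee_minus: "b + ee k - ee k = b"
  by (rule poly_mapping_eqI) (auto simp: lookup_add lookup_minus lookup_single when_def)

lemma minus_ee_eq: "m - ee k = b \<Longrightarrow> Poly_Mapping.lookup m k \<noteq> 0 \<Longrightarrow> m = b + ee k"
  by (rule poly_mapping_eqI) (auto simp: lookup_add lookup_minus lookup_single when_def)

lemma lookup_pd: "Poly_Mapping.lookup (pd k P) b =
   of_nat (Poly_Mapping.lookup b k + 1) * Poly_Mapping.lookup P (b + ee k)"
proof -
  have "Poly_Mapping.lookup (pd k P) b = (\<Sum>m\<in>Poly_Mapping.keys P.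
      (of_nat (Poly_Mapping.lookup m k) * Poly_Mapping.lookup P m when m - ee k = b))"
    unfolding pd_def lookup_sum lookup_single ..
  also have "\<dots> = (\<Sum>m\<in>Poly_Mapping.keys P. if m = b + ee k then
      of_nat (Poly_Mapping.lookup b k + 1) * Poly_Mapping.lookup P (b + ee k) else 0)"
  proof (rule sum.cong)
    fix m assume "m \<in> Poly_Mapping.keys P"
    show "(of_nat (Poly_Mapping.lookup m k) * Poly_Mapping.lookup P m when m - ee k = b) =
      (if m = b + ee k then of_nat (Poly_Mapping.lookup b k + 1) * Poly_Mapping.lookup P (b + ee k) else 0)"
    proof (cases "m = b + ee k")
      case True then show ?thesis by (simp add: plus_ee_minus lookup_add)
    next
      case False then show ?thesis using minus_ee_eq[of m k b] by (auto simp: when_def)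
    qed
  qed simp
  also have "\<dots> = of_nat (Poly_Mapping.lookup b k + 1) * Poly_Mapping.lookup P (b + ee k)"
    by (simp add: in_keys_iff)
  finally show ?thesis .
qed

lemma keys_pd: "b \<in> Poly_Mapping.keys (pd k P) \<Longrightarrow> b + ee k \<in> Poly_Mapping.keys P"
  by (auto simp: in_keys_iff lookup_pd)

lemma deg_ge: "a \<in> Poly_Mapping.keys P \<Longrightarrow> tdeg a \<le> deg P"
  unfolding deg_def by (rule Max_ge) auto

lemma deg_pd_less: assumes "pd k P \<noteq> 0" shows "deg (pd k P) < deg P"
proof -
  have lt: "tdeg b < deg P" if "b \<in> Poly_Mapping.keys (pd k P)" for b
  proof -
    have "tdeg (b + ee k) \<le> deg P" using deg_ge keys_pd[OF that] by blast
    moreover have "tdeg (b + ee k) = tdeg b + 1" unfolding tdeg_add tdeg_ee ..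
    ultimately show ?thesis by simp
  qed
  obtain b where "b \<in> Poly_Mapping.keys (pd k P)" using assms by (metis all_not_in_conv keys_eq_empty)
  hence "0 < deg P" using lt by fastforce
  then show ?thesis unfolding deg_def[of "pd k P"]
    by (subst Max_less_iff) (use lt in auto)
qed

lemma const_of_pd_zero:
  assumes "in_A m P" "\<forall>k<m. pd k P = 0"
  shows "P = Const (Poly_Mapping.lookup P 0)"
proof -
  have "a = 0" if a: "a \<in> Poly_Mapping.keys P" for a
  proof (rule ccontr)
    assume "a \<noteq> 0"
    then obtain k where k: "k \<in> Poly_Mapping.keys a" by (metis all_not_in_conv keys_eq_empty)
    have "k < m" using assms(1) a k unfolding in_A_def by auto
    have ak: "Poly_Mapping.lookup a k \<noteq> 0" using k by (simp add: in_keys_iff)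
    have e: "a - ee k + ee k = a" using minus_ee_eq[OF refl ak] by simp
    have "Poly_Mapping.lookup (pd k P) (a - ee k) \<noteq> 0"
      unfolding lookup_pd e using a by (simp add: in_keys_iff del: of_nat_Suc)
    then show False using assms(2) \<open>k < m\<close> by simp
  qed
  then show ?thesis
    by (intro poly_mapping_eqI) (auto simp: Const_def lookup_single when_def in_keys_iff)
qed



lemma sum_split2: "(\<Sum>r = 0..<(m::nat)+2. f r) = f 0 + f 1 + (\<Sum>k<m. f (k+2))"
  by (induction m) (simp_all add: ac_simps)

lemma prod_split2: "(\<Prod>r = 0..<(m::nat)+2. f r) = f 0 * f 1 * (\<Prod>k<m. f (k+2))"
  by (induction m) (simp_all add: ac_simps)

lemma alg_dep_det:
  fixes gg :: "nat \<Rightarrow> mpoly" and a b :: "nat \<Rightarrow> mpoly"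
  assumes dep: "alg_dependent Const m gg" and nm: "n = m + 2"
  shows "det (mat n n (\<lambda>(r,c). if r=0 then a c else if r=1 then b c else pd c (gg (r-2)))) = 0"
proof -
  let ?ev = "eval_gen Const gg"
  obtain P0 where P0: "P0 \<noteq> 0 \<and> in_A m P0 \<and> ?ev P0 = 0"
    using dep unfolding alg_dependent_def by auto
  obtain Q where Q: "Q \<noteq> 0 \<and> in_A m Q \<and> ?ev Q = 0"
    and min: "\<forall>Q'. Q' \<noteq> 0 \<and> in_A m Q' \<and> ?ev Q' = 0 \<longrightarrow> deg Q \<le> deg Q'"
    using ex_has_least_nat[of "\<lambda>Q. Q \<noteq> 0 \<and> in_A m Q \<and> ?ev Q = 0" P0 deg] P0 by blast
  have "\<exists>k<m. pd k Q \<noteq> 0"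
  proof (rule ccontr)
    assume "\<not> ?thesis"
    then have QC: "Q = Const (Poly_Mapping.lookup Q 0)" using const_of_pd_zero Q by blast
    have "?ev Q = Const (Poly_Mapping.lookup Q 0)"
      by (subst QC) (rule eval_Const[OF Const_hom])
    then have "Const (Poly_Mapping.lookup Q 0) = Const 0" using Q by simp
    then have "Poly_Mapping.lookup Q 0 = 0" by (metis Const_inj)
    then show False using QC Q by simp
  qed
  then obtain k0 where k0: "k0 < m" "pd k0 Q \<noteq> 0" by auto
  have ck0: "?ev (pd k0 Q) \<noteq> 0"
  proof
    assume "?ev (pd k0 Q) = 0"
    then have "deg Q \<le> deg (pd k0 Q)" using min k0 in_A_pd Q by blast
    then show False using deg_pd_less[OF k0(2)] by simp
  qed
  define cc where "cc k = ?ev (pd k Q)" for k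
  have comb: "(\<Sum>k<m. pd c (gg k) * cc k) = 0" for c
  proof -
    have "pd c (?ev Q) = (\<Sum>k<m. cc k * pd c (gg k))" unfolding cc_def using chain_rule Q by blast
    then show ?thesis using Q by (simp add: ac_simps)
  qed
  define M where "M = mat n n (\<lambda>(r,c). if r=0 then a c else if r=1 then b c else pd c (gg (r-2)))"
  have M: "M \<in> carrier_mat n n" unfolding M_def by auto
  define v where "v = vec n (\<lambda>r. if r < 2 then 0 else cc (r-2))"
  have v: "v \<in> carrier_vec n" unfolding v_def by auto
  have vnz: "v \<noteq> 0\<^sub>v n"
  proof
    assume "v = 0\<^sub>v n"
    then have "v $ (k0+2) = 0" using k0 nm by simp
    then show False using ck0 k0 nm unfolding v_def cc_def by simp
  qed
  have "transpose_mat M *\<^sub>v v = 0\<^sub>v n"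
  proof (rule eq_vecI)
    fix c assume "c < dim_vec (0\<^sub>v n)"
    then have c: "c < n" by simp
    have "(transpose_mat M *\<^sub>v v) $ c = (\<Sum>r = 0..<n. M $$ (r, c) * v $ r)"
      using c M v by (simp add: scalar_prod_def)
    also have "\<dots> = (\<Sum>k<m. pd c (gg k) * cc k)"
      unfolding nm sum_split2 using c nm by (simp add: M_def v_def)
    also have "\<dots> = 0" by (rule comb)
    finally show "(transpose_mat M *\<^sub>v v) $ c = 0\<^sub>v n $ c" using c by simp
  qed (use M in simp)
  then have "det (transpose_mat M) = 0"
    using det_0_iff_vec_prod_zero[of "transpose_mat M" n] M v vnz by auto
  then show ?thesis using det_transpose[OF M] unfolding M_def by simp
qed

section \<open>The bracket as a polynomial\<close>

definition Nmat :: "nat \<Rightarrow> (nat \<Rightarrow> mpoly) \<Rightarrow> (nat \<Rightarrow> mpoly) \<Rightarrow> mpoly \<Rightarrow> mpoly \<Rightarrow> mpoly mat" where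
  "Nmat n s t f g = mat n n (\<lambda>(r,c). if r=0 then pd c f else if r=1 then pd c g
      else t (r-2) * pd c (s (r-2)) - s (r-2) * pd c (t (r-2)))"

interpretation tf: inj_comm_ring_hom "to_fract :: mpoly \<Rightarrow> mpoly fract"
  by unfold_locales auto

lemma pbracket_eq:
  assumes t: "\<forall>i<n-2. t i \<noteq> 0" and n: "2 \<le> n"
  shows "pbracket n s t f g = to_fract (det (Nmat n s t f g))"
proof -
  obtain m where nm: "n = m + 2" using n by (metis add.commute le_Suc_ex)
  define M where "M = mat n n (\<lambda>(r, c).
        if r = 0 then to_fract (pd c f)
        else if r = 1 then to_fract (pd c g)
        else pd_frac c (s (r - 2)) (t (r - 2)))"
  define N where "N = Nmat n s t f g"
  have M: "M \<in> carrier_mat n n" and N: "N \<in> carrier_mat n n" unfolding M_def N_def Nmat_def by auto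
  define cf where "cf r = (if r < 2 then 1 else to_fract (t (r-2) ^ 2))" for r
  have cM: "cf r * M $$ (r, q) = to_fract (N $$ (r, q))" if "r < n" "q < n" for r q
  proof (cases "r < 2")
    case True then show ?thesis using that unfolding cf_def M_def N_def Nmat_def by auto
  next
    case False
    then have tz: "t (r-2) ^ 2 \<noteq> 0" using t that by auto
    have "Fract (t (r-2) ^ 2) 1 * Fract (t (r - 2) * pd q (s (r - 2)) - s (r - 2) * pd q (t (r - 2))) (t (r-2) ^ 2)
       = Fract (t (r - 2) * pd q (s (r - 2)) - s (r - 2) * pd q (t (r - 2))) 1"
      using tz by (simp add: mult_fract eq_fract)
    then show ?thesis using that False unfolding cf_def M_def N_def Nmat_def pd_frac_def
      by (simp add: to_fract_def)
  qed
  have cprod: "(\<Prod>r = 0..<n. cf r) = to_fract ((\<Prod>i<n-2. t i) ^ 2)"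
    unfolding nm prod_split2 by (simp add: cf_def tf.hom_prod tf.hom_power prod_power_distrib)
  have "pbracket n s t f g = (\<Prod>r = 0..<n. cf r) * det M"
    unfolding pbracket_def M_def cprod ..
  also have "\<dots> = (\<Sum>p\<in>{p. p permutes {0..<n}}. signof p * (\<Prod>r = 0..<n. cf r * M $$ (r, p r)))"
    unfolding det_def'[OF M] sum_distrib_left prod.distrib by (simp add: ac_simps)
  also have "\<dots> = (\<Sum>p\<in>{p. p permutes {0..<n}}. signof p * (\<Prod>r = 0..<n. to_fract (N $$ (r, p r))))"
    by (intro sum.cong refl arg_cong2[where f="(*)"] prod.cong) (auto simp: cM permutes_in_image)
  also have "\<dots> = to_fract (det N)"
    unfolding det_def'[OF N] by (simp add: tf.hom_sum tf.hom_mult tf.hom_prod)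
  finally show ?thesis unfolding N_def .
qed



lemma in_A_det:
  assumes "A \<in> carrier_mat k k" "\<And>i j. i < k \<Longrightarrow> j < k \<Longrightarrow> in_A n (A $$ (i,j))"
  shows "in_A n (det A)"
  unfolding det_def'[OF assms(1)]
  by (intro in_A_sum in_A_mult in_A_of_int in_A_prod) (use assms permutes_in_image in auto)

lemma det_zero_row:
  fixes A :: "'a::comm_ring_1 mat"
  assumes "A \<in> carrier_mat k k" "r < k" "\<And>j. j < k \<Longrightarrow> A $$ (r,j) = 0"
  shows "det A = 0"
  unfolding det_def'[OF assms(1)]
proof (rule sum.neutral, intro ballI)
  fix q assume "q \<in> {q. q permutes {0..<k}}"
  then have qr: "q r < k" using assms(2) permutes_in_image by fastforce
  have ex: "\<exists>a\<in>{0..<k}. A $$ (a, q a) = 0"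
    using assms(2) assms(3)[OF qr] by auto
  have "(\<Prod>i = 0..<k. A $$ (i, q i)) = 0"
    by (rule prod_zero[OF _ ex]) simp
  then show "signof q * (\<Prod>i = 0..<k. A $$ (i, q i)) = 0" by simp
qed

theorem lemma3p2:
  fixes n :: nat and s t :: "nat \<Rightarrow> mpoly" and p :: "nat \<Rightarrow> complex"
  assumes "n \<ge> 3"
    and "\<forall>i<n-2. in_A n (s i) \<and> in_A n (t i)"
    and "\<forall>i<n-2. t i \<noteq> 0"
    and "\<forall>i<n-2. coprime_p (s i) (t i)"
    and "\<not> alg_dependent (\<lambda>c. to_fract (Const c)) (n-2) (\<lambda>i. Fract (s i) (t i))"
  shows "poisson_ideal n s t (Mp n p) \<longleftrightarrow>
    (let g = (\<lambda>i. Const (evalp p (t i)) * s i - Const (evalp p (s i)) * t i) in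
      (\<exists>i<n-2. evalp p (s i) = 0 \<and> evalp p (t i) = 0)
      \<or> alg_dependent Const (n-2) g
      \<or> vec_space.rank (n-2) (mat (n-2) n (\<lambda>(i, j). evalp p (pd j (g i)))) < n-2)"
proof -
  define m where "m = n - 2"
  have nm: "n = m + 2" using assms(1) unfolding m_def by simp
  define gg where "gg i = Const (evalp p (t i)) * s i - Const (evalp p (s i)) * t i" for i
  define J where "J = mat m n (\<lambda>(i, j). evalp p (pd j (gg i)))"
  have J: "J \<in> carrier_mat m n" unfolding J_def by simp
  have sA: "in_A n (s k)" "in_A n (t k)" if "k < m" for k using assms(2) that unfolding m_def by auto
  have Gev: "evalp p (t k * pd c (s k) - s k * pd c (t k)) = J $$ (k, c)" if "k < m" "c < n" for k c
  proof -
    have "pd c (gg k) = Const (evalp p (t k)) * pd c (s k) - Const (evalp p (s k)) * pd c (t k)"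
      unfolding gg_def pd_diff pd_Const_mult ..
    then show ?thesis using that unfolding J_def
      by (simp add: ev.hom_minus ev.hom_mult ac_simps)
  qed
  have evalN: "evalp p (det (Nmat n s t f g)) =
      det (Wm n J (\<lambda>c. evalp p (pd c f)) (\<lambda>c. evalp p (pd c g)))" for f g
  proof -
    have "map_mat (evalp p) (Nmat n s t f g) = Wm n J (\<lambda>c. evalp p (pd c f)) (\<lambda>c. evalp p (pd c g))"
      by (rule eq_matI) (auto simp: Nmat_def Wm_def Gev nm)
    then show ?thesis using ev.hom_det by metis
  qed
  \<comment> \<open>the Poisson property is equivalent to the rank condition\<close>
  have rank_imp: "poisson_ideal n s t (Mp n p)" if r: "vec_space.rank m J < m"
    unfolding poisson_ideal_def
  proof (intro conjI Mp_ideal ballI allI impI)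
    fix f g assume f: "f \<in> Mp n p" and g: "in_A n g"
    have fA: "in_A n f" using Mp_in_A[OF f] .
    let ?h = "det (Nmat n s t f g)"
    have hA: "in_A n ?h"
    proof (rule in_A_det)
      show "Nmat n s t f g \<in> carrier_mat n n" unfolding Nmat_def by simp
      fix i j assume "i < n" "j < n"
      then show "in_A n (Nmat n s t f g $$ (i, j))"
        unfolding Nmat_def using fA g sA nm
        by (auto intro!: in_A_pd in_A_diff in_A_mult)
    qed
    have "det (Wm n J (\<lambda>c. evalp p (pd c f)) (\<lambda>c. evalp p (pd c g))) = 0"
      using LA1[OF J nm] r by fastforce
    then have "evalp p ?h = 0" using evalN by simp
    then have "?h \<in> Mp n p" using in_Mp hA by blast
    moreover have "pbracket n s t f g = to_fract ?h"
      by (rule pbracket_eq) (use assms nm in auto)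
    ultimately show "\<exists>h\<in>Mp n p. pbracket n s t f g = to_fract h" by blast
  qed
  have imp_rank: "vec_space.rank m J < m" if P: "poisson_ideal n s t (Mp n p)"
  proof (rule ccontr)
    assume "\<not> ?thesis"
    then obtain i j where ij: "i < n" "j < n"
      and d: "det (Wm n J (\<lambda>c. if c = i then 1 else 0) (\<lambda>c. if c = j then 1 else 0)) \<noteq> 0"
      using LA2[OF J nm] by blast
    let ?f = "Var i - Const (p i)" and ?g = "Var j"
    have f: "?f \<in> Mp n p" using Mp_Var ij by blast
    have g: "in_A n ?g" using in_A_Var ij by blast
    obtain h where h: "h \<in> Mp n p" "pbracket n s t ?f ?g = to_fract h"
      using P f g unfolding poisson_ideal_def by blast
    have "pbracket n s t ?f ?g = to_fract (det (Nmat n s t ?f ?g))"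
      by (rule pbracket_eq) (use assms nm in auto)
    then have "h = det (Nmat n s t ?f ?g)" using h by simp
    then have "evalp p (det (Nmat n s t ?f ?g)) = 0" using Mp_eval h by blast
    moreover have "(\<lambda>c. evalp p (pd c ?f)) = (\<lambda>c. if c = i then 1 else 0)"
      by (rule ext) (simp add: pd_diff pd_Var)
    moreover have "(\<lambda>c. evalp p (pd c ?g)) = (\<lambda>c. if c = j then 1 else 0)"
      by (rule ext) (simp add: pd_Var)
    ultimately show False using d evalN[of ?f ?g] by simp
  qed
  \<comment> \<open>conditions (1) and (2) imply the rank condition\<close>
  have c1: "vec_space.rank m J < m" if ex: "\<exists>k<m. evalp p (s k) = 0 \<and> evalp p (t k) = 0"
  proof (rule ccontr)
    assume "\<not> ?thesis"
    then obtain i j where d: "det (Wm n J (\<lambda>c. if c = i then 1 else 0) (\<lambda>c. if c = j then 1 else 0)) \<noteq> 0"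
      using LA2[OF J nm] by blast
    obtain k where k: "k < m" "evalp p (s k) = 0" "evalp p (t k) = 0" using ex by blast
    have "gg k = 0" unfolding gg_def using k by simp
    then have "det (Wm n J (\<lambda>c. if c = i then 1 else 0) (\<lambda>c. if c = j then 1 else 0)) = 0"
      by (intro det_zero_row[of _ n "k+2"]) (use k nm in \<open>auto simp: Wm_def J_def\<close>)
    then show False using d by simp
  qed
  have c2: "vec_space.rank m J < m" if dep: "alg_dependent Const m gg"
  proof (rule ccontr)
    assume "\<not> ?thesis"
    then obtain i j where d: "det (Wm n J (\<lambda>c. if c = i then 1 else 0) (\<lambda>c. if c = j then 1 else 0)) \<noteq> 0"
      using LA2[OF J nm] by blast
    let ?M = "mat n n (\<lambda>(r,c). if r=0 then (if c = i then 1 else 0) else if r=1 then (if c = j then 1 else 0)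
       else pd c (gg (r-2)))"
    have z: "det ?M = 0" using alg_dep_det[OF dep nm] .
    have meq: "map_mat (evalp p) ?M = Wm n J (\<lambda>c. if c = i then 1 else 0) (\<lambda>c. if c = j then 1 else 0)"
      by (rule eq_matI) (auto simp: Wm_def J_def nm)
    have "det (map_mat (evalp p) ?M) = evalp p (det ?M)" by (rule ev.hom_det)
    then have "det (Wm n J (\<lambda>c. if c = i then 1 else 0) (\<lambda>c. if c = j then 1 else 0)) = 0"
      unfolding meq z by simp
    then show False using d by simp
  qed
  have "poisson_ideal n s t (Mp n p) \<longleftrightarrow>
     (\<exists>i<m. evalp p (s i) = 0 \<and> evalp p (t i) = 0) \<or> alg_dependent Const m gg \<or> vec_space.rank m J < m"
    using rank_imp imp_rank c1 c2 by blast
  then show ?thesis unfolding Let_def m_def[symmetric] gg_def[symmetric] J_def[symmetric] .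
qed

end
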